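(* In the setting described in the context, consider the two problems $$(\mathrm{ACC})\ \max_{\boldsymbol\alpha}\min\Big\{\min_{(i,\theta_b)\in\Xi}W_i(\theta_b)G_i(\theta_b),\ \min_{i\ne i^*,\,\theta_b\in\Theta_{i^*}}G_i(\theta_b),\ \min_{\theta_b\notin\Theta_{i^*}}G_{i^*}(\theta_b)\Big\},$$ $$(\mathrm{FN})\ \max_{\boldsymbol\alpha}\min\Big\{\min_{(i,\theta_b)\in\Xi}W_i(\theta_b)G_i(\theta_b),\ \min_{\theta_b\notin\Theta_{i^*}}G_{i^*}(\theta_b)\Big\},$$ each subject to $\sum_{i,b}\alpha_i(\theta_b)=1$, $\alpha_i(\theta_b)\ge0$. An allocation $\boldsymbol\alpha$ is optimal for (ACC) (respectively (FN)) if and only if: (i) for all $1\le b\le B$, $\alpha_{i^b}^2(\theta_b)/\lambda_{i^b}^2(\theta_b)=\sum_{i\ne i^b}\alpha_i^2(\theta_b)/\lambda_i^2(\theta_b)$; and (ii) for all $(i,\theta_b),(j,\theta_{b'})\in\Xi\cup\Xi^{\mathrm{adv}}$, $W^{\mathrm{ACC}}_i(\theta_b)G_i(\theta_b)=W^{\mathrm{ACC}}_j(\theta_{b'})G_j(\theta_{b'})$ (respectively $W^{\mathrm{FN}}_i(\theta_b)G_i(\theta_b)=W^{\mathrm{FN}}_j(\theta_{b'})G_j(\theta_{b'})$).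
   Context: There are $k\ge2$ solutions and parameter values $\theta_1,\dots,\theta_B$ with probabilities $p_b>0$, $\sum_bp_b=1$. For each $i,b$: $y_i(\theta_b)\in\mathbb R$ and $\lambda_i(\theta_b)>0$. Each $i^b=\arg\min_iy_i(\theta_b)$ unique; $i^*=\arg\max_i\sum_bp_b\mathbf 1\{i=i^b\}$ unique; $\Theta_i=\{\theta_b:i^b=i\}$. For an allocation $\boldsymbol\alpha$ and $i\ne i^b$, $G_i(\theta_b)=\frac{(y_i(\theta_b)-y_{i^b}(\theta_b))^2}{2(\lambda_i^2(\theta_b)/\alpha_i(\theta_b)+\lambda^2_{i^b}(\theta_b)/\alpha_{i^b}(\theta_b))}$, set to $0$ if $\alpha_i(\theta_b)=0$ or $\alpha_{i^b}(\theta_b)=0$. Let $d_j=\sum_bp_b\mathbf 1\{i^*=i^b\}-\sum_bp_b\mathbf 1\{j=i^b\}$, $\Xi=\{(i,\theta_b):i\ne i^*,i\ne i^b\}$, $\Xi^{\mathrm{adv}}=\{(i^*,\theta_b):\theta_b\notin\Theta_{i^*}\}$. For $(i,\theta_b)\in\Xi$: $W_i(\theta_b)=\max\{\min(\min_{j\ne i^*}d_j,d_i/2)/p_b,1\}$ if $\theta_b\in\Theta_{i^*}$, and $W_i(\theta_b)=\max\{d_i/p_b,1\}$ if $\theta_b\notin\Theta_{i^*}$. Modified weights on $\Xi\cup\Xi^{\mathrm{adv}}$: $W^{\mathrm{ACC}}_i(\theta_b)=1$ if $\theta_b\in\Theta_{i^*}$ or $(i,\theta_b)\in\Xi^{\mathrm{adv}}$,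 and $W^{\mathrm{ACC}}_i(\theta_b)=W_i(\theta_b)$ if $(i,\theta_b)\in\Xi$ with $\theta_b\notin\Theta_{i^*}$; $W^{\mathrm{FN}}_i(\theta_b)=W_i(\theta_b)$ if $(i,\theta_b)\in\Xi$ and $=1$ if $(i,\theta_b)\in\Xi^{\mathrm{adv}}$; both are $\infty$ outside $\Xi\cup\Xi^{\mathrm{adv}}$. *)

theory Defs
  imports Main "HOL-Library.FuncSet" Complex_Main
begin

text \<open>Solutions are indexed by i < k, parameter values theta_b by b < B.
  p b is the probability of theta_b, y i b = y_i(theta_b), lam i b = lambda_i(theta_b),
  and an allocation is a function al with al i b = alpha_i(theta_b).\<close>

definition ibest :: "nat \<Rightarrow> (nat \<Rightarrow> nat \<Rightarrow> real) \<Rightarrow> nat \<Rightarrow> nat" where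
  "ibest k y b = (THE i. i < k \<and> (\<forall>j<k. j \<noteq> i \<longrightarrow> y i b < y j b))"

definition freq :: "nat \<Rightarrow> nat \<Rightarrow> (nat \<Rightarrow> real) \<Rightarrow> (nat \<Rightarrow> nat \<Rightarrow> real) \<Rightarrow> nat \<Rightarrow> real" where
  "freq k B p y i = (\<Sum>b<B. p b * (if i = ibest k y b then 1 else 0))"

definition istar :: "nat \<Rightarrow> nat \<Rightarrow> (nat \<Rightarrow> real) \<Rightarrow> (nat \<Rightarrow> nat \<Rightarrow> real) \<Rightarrow> nat" where
  "istar k B p y = (THE i. i < k \<and> (\<forall>j<k. j \<noteq> i \<longrightarrow> freq k B p y j < freq k B p y i))"

definition Theta :: "nat \<Rightarrow> nat \<Rightarrow> (nat \<Rightarrow> nat \<Rightarrow> real) \<Rightarrow> nat \<Rightarrow> nat set" where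
  "Theta k B y i = {b. b < B \<and> ibest k y b = i}"

definition Gfun :: "nat \<Rightarrow> (nat \<Rightarrow> nat \<Rightarrow> real) \<Rightarrow> (nat \<Rightarrow> nat \<Rightarrow> real)
                    \<Rightarrow> (nat \<Rightarrow> nat \<Rightarrow> real) \<Rightarrow> nat \<Rightarrow> nat \<Rightarrow> real" where
  "Gfun k y lam al i b =
     (let ib = ibest k y b in
      if al i b = 0 \<or> al ib b = 0 then 0
      else (y i b - y ib b)^2 / (2 * ((lam i b)^2 / al i b + (lam ib b)^2 / al ib b)))"

definition dgap :: "nat \<Rightarrow> nat \<Rightarrow> (nat \<Rightarrow> real) \<Rightarrow> (nat \<Rightarrow> nat \<Rightarrow> real) \<Rightarrow> nat \<Rightarrow> real" where
  "dgap k B p y j = freq k B p y (istar k B p y) - freq k B p y j"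

definition Xi :: "nat \<Rightarrow> nat \<Rightarrow> (nat \<Rightarrow> real) \<Rightarrow> (nat \<Rightarrow> nat \<Rightarrow> real) \<Rightarrow> (nat \<times> nat) set" where
  "Xi k B p y = {(i, b). i < k \<and> b < B \<and> i \<noteq> istar k B p y \<and> i \<noteq> ibest k y b}"

definition Xiadv :: "nat \<Rightarrow> nat \<Rightarrow> (nat \<Rightarrow> real) \<Rightarrow> (nat \<Rightarrow> nat \<Rightarrow> real) \<Rightarrow> (nat \<times> nat) set" where
  "Xiadv k B p y = {(i, b). i = istar k B p y \<and> b < B \<and> b \<notin> Theta k B y (istar k B p y)}"

definition Wfun :: "nat \<Rightarrow> nat \<Rightarrow> (nat \<Rightarrow> real) \<Rightarrow> (nat \<Rightarrow> nat \<Rightarrow> real) \<Rightarrow> nat \<Rightarrow> nat \<Rightarrow> real" where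
  "Wfun k B p y i b =
     (if b \<in> Theta k B y (istar k B p y)
      then max (min (Min {dgap k B p y j | j. j < k \<and> j \<noteq> istar k B p y})
                    (dgap k B p y i / 2) / p b) 1
      else max (dgap k B p y i / p b) 1)"

text \<open>Modified weights; only their values on Xi \<union> Xiadv are ever used
  (outside that set the paper sets them to infinity).\<close>
definition WACC :: "nat \<Rightarrow> nat \<Rightarrow> (nat \<Rightarrow> real) \<Rightarrow> (nat \<Rightarrow> nat \<Rightarrow> real) \<Rightarrow> nat \<Rightarrow> nat \<Rightarrow> real" where
  "WACC k B p y i b =
     (if b \<in> Theta k B y (istar k B p y) \<or> (i, b) \<in> Xiadv k B p y then 1 else Wfun k B p y i b)"

definition WFN :: "nat \<Rightarrow> nat \<Rightarrow> (nat \<Rightarrow> real) \<Rightarrow> (nat \<Rightarrow> nat \<Rightarrow> real) \<Rightarrow> nat \<Rightarrow> nat \<Rightarrow> real" where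
  "WFN k B p y i b = (if (i, b) \<in> Xi k B p y then Wfun k B p y i b else 1)"

definition feasible :: "nat \<Rightarrow> nat \<Rightarrow> (nat \<Rightarrow> nat \<Rightarrow> real) \<Rightarrow> bool" where
  "feasible k B al \<longleftrightarrow> (\<forall>i<k. \<forall>b<B. al i b \<ge> 0) \<and> (\<Sum>i<k. \<Sum>b<B. al i b) = 1"

text \<open>The minimum of the (up to three) inner minima is written as the
  minimum over the union of the value sets; an empty inner group thus drops out
  (the usual convention min of the empty set = +infinity).\<close>
definition objACC :: "nat \<Rightarrow> nat \<Rightarrow> (nat \<Rightarrow> real) \<Rightarrow> (nat \<Rightarrow> nat \<Rightarrow> real) \<Rightarrow> (nat \<Rightarrow> nat \<Rightarrow> real)
                      \<Rightarrow> (nat \<Rightarrow> nat \<Rightarrow> real) \<Rightarrow> real" where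
  "objACC k B p y lam al =
     Min ({Wfun k B p y i b * Gfun k y lam al i b | i b. (i, b) \<in> Xi k B p y}
        \<union> {Gfun k y lam al i b | i b. i < k \<and> i \<noteq> istar k B p y \<and> b \<in> Theta k B y (istar k B p y)}
        \<union> {Gfun k y lam al (istar k B p y) b | b. b < B \<and> b \<notin> Theta k B y (istar k B p y)})"

definition objFN :: "nat \<Rightarrow> nat \<Rightarrow> (nat \<Rightarrow> real) \<Rightarrow> (nat \<Rightarrow> nat \<Rightarrow> real) \<Rightarrow> (nat \<Rightarrow> nat \<Rightarrow> real)
                      \<Rightarrow> (nat \<Rightarrow> nat \<Rightarrow> real) \<Rightarrow> real" where
  "objFN k B p y lam al =
     Min ({Wfun k B p y i b * Gfun k y lam al i b | i b. (i, b) \<in> Xi k B p y}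
        \<union> {Gfun k y lam al (istar k B p y) b | b. b < B \<and> b \<notin> Theta k B y (istar k B p y)})"

definition optimal :: "nat \<Rightarrow> nat \<Rightarrow> ((nat \<Rightarrow> nat \<Rightarrow> real) \<Rightarrow> real) \<Rightarrow> (nat \<Rightarrow> nat \<Rightarrow> real) \<Rightarrow> bool" where
  "optimal k B obj al \<longleftrightarrow> feasible k B al \<and> (\<forall>al'. feasible k B al' \<longrightarrow> obj al' \<le> obj al)"

definition balance_cond :: "nat \<Rightarrow> nat \<Rightarrow> (nat \<Rightarrow> nat \<Rightarrow> real) \<Rightarrow> (nat \<Rightarrow> nat \<Rightarrow> real)
                            \<Rightarrow> (nat \<Rightarrow> nat \<Rightarrow> real) \<Rightarrow> bool" where
  "balance_cond k B y lam al \<longleftrightarrow>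
     (\<forall>b<B. (al (ibest k y b) b)^2 / (lam (ibest k y b) b)^2
            = (\<Sum>i\<in>{i. i < k \<and> i \<noteq> ibest k y b}. (al i b)^2 / (lam i b)^2))"

definition equal_cond :: "(nat \<times> nat) set \<Rightarrow> (nat \<Rightarrow> nat \<Rightarrow> real) \<Rightarrow> (nat \<Rightarrow> nat \<Rightarrow> real) \<Rightarrow> bool" where
  "equal_cond S Wt Gv \<longleftrightarrow>
     (\<forall>(i, b)\<in>S. \<forall>(j, b')\<in>S. Wt i b * Gv i b = Wt j b' * Gv j b')"

end

theory Submission
  imports Defs
begin


lemma root_exists:
  fixes N :: "nat set" and L c :: "nat \<Rightarrow> real" and L0 :: real
  assumes fin: "finite N" and ne: "N \<noteq> {}" and L0: "L0 > 0"
    and Lp: "\<forall>i\<in>N. L i > 0" and cp: "\<forall>i\<in>N. c i > 0"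
  shows "\<exists>u. 0 < u \<and> (\<forall>i\<in>N. u < c i) \<and> L0 / u^2 = (\<Sum>i\<in>N. L i / (c i - u)^2)"
proof -
  define c0 where "c0 = Min (c ` N)"
  have c0N: "c0 \<in> c ` N" unfolding c0_def using fin ne by simp
  then obtain j where jN: "j \<in> N" and cj: "c j = c0" by auto
  have c0le: "\<forall>i\<in>N. c0 \<le> c i" unfolding c0_def using fin by simp
  have c0p: "c0 > 0" using cp jN cj by auto
  define M where "M = (\<Sum>i\<in>N. 4 * L i / c0^2)"
  have Mp: "M > 0" unfolding M_def using fin ne Lp c0p
    by (intro sum_pos) auto
  define f where "f u = L0 / u^2 - (\<Sum>i\<in>N. L i / (c i - u)^2)" for u
  define u1 where "u1 = min (c0/2) (min 1 (L0 / (M+1)))"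
  have u1p: "u1 > 0" unfolding u1_def using c0p L0 Mp by auto
  have u1le: "u1 \<le> c0/2" "u1 \<le> 1" "u1 \<le> L0/(M+1)" unfolding u1_def
    by (rule min.cobounded1, meson min.cobounded1 min.coboundedI2, meson min.cobounded2 min.coboundedI2)
  have f1: "f u1 \<ge> 0"
  proof -
    have "u1^2 \<le> u1" using u1p u1le by (simp add: power2_eq_square mult_le_cancel_left1)
    also have "\<dots> \<le> L0/(M+1)" by fact
    finally have "u1^2 \<le> L0/(M+1)" .
    hence "(M+1) * u1^2 \<le> L0" using Mp by (simp add: field_simps)
    hence A: "M \<le> L0 / u1^2" using u1p by (simp add: field_simps) (smt (verit) zero_le_power2)
    have "(\<Sum>i\<in>N. L i / (c i - u1)^2) \<le> M" unfolding M_def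
    proof (rule sum_mono)
      fix i assume iN: "i \<in> N"
      have "c0/2 \<le> c i - u1" using c0le iN u1le by fastforce
      hence "(c0/2)^2 \<le> (c i - u1)^2" using c0p by (intro power_mono) auto
      moreover have "c i - u1 > 0" using \<open>c0/2 \<le> c i - u1\<close> c0p by linarith
      ultimately have "L i / (c i - u1)^2 \<le> L i / (c0/2)^2" using Lp iN c0p
        by (intro divide_left_mono mult_pos_pos) auto
      thus "L i / (c i - u1)^2 \<le> 4 * L i / c0^2" by (simp add: power_divide mult.commute)
    qed
    thus ?thesis unfolding f_def using A by linarith
  qed
  define d where "d = min (c0/2) (min 1 (L j * c0^2 / (8 * L0)))"
  have dp: "d > 0" unfolding d_def using c0p L0 Lp jN by auto
  have dle: "d \<le> c0/2" "d \<le> 1" "d \<le> L j * c0^2 / (8 * L0)" unfolding d_def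
    by (rule min.cobounded1, meson min.cobounded1 min.coboundedI2, meson min.cobounded2 min.coboundedI2)
  define u2 where "u2 = c0 - d"
  have f2: "f u2 \<le> 0"
  proof -
    have "d^2 \<le> d" using dp dle by (simp add: power2_eq_square mult_le_cancel_left1)
    also have "\<dots> \<le> L j * c0^2 / (8 * L0)" by fact
    finally have "d^2 \<le> L j * c0^2 / (8 * L0)" .
    hence B: "8 * L0 * d^2 \<le> L j * c0^2" using L0 by (simp add: field_simps)
    have u2ge: "c0/2 \<le> u2" using dle unfolding u2_def by simp
    hence "(c0/2)^2 \<le> u2^2" using c0p by (intro power_mono) auto
    moreover have "u2 > 0" using u2ge c0p by linarith
    ultimately have "L0 / u2^2 \<le> L0 / (c0/2)^2" using L0 c0p by (intro divide_left_mono mult_pos_pos) auto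
    hence C: "L0 / u2^2 \<le> 4 * L0 / c0^2" by (simp add: power_divide mult.commute)
    have P: "0 < L0 * d^2" using L0 dp by simp
    have B': "8 * (L0 * d^2) \<le> L j * c0^2" using B by (simp add: algebra_simps)
    have Q: "4 * (L0 * d^2) < L j * c0^2" using B' P by linarith
    have "4 * L0 / c0^2 < L j / d^2" using Q dp c0p by (simp add: field_simps mult.assoc mult.left_commute)
    moreover have "L j / (c j - u2)^2 = L j / d^2" using cj unfolding u2_def by simp
    moreover have "L j / (c j - u2)^2 \<le> (\<Sum>i\<in>N. L i / (c i - u2)^2)"
      using fin jN Lp by (intro member_le_sum) auto
    ultimately show ?thesis unfolding f_def using C by linarith
  qed
  have u12: "u1 \<le> u2" using u1le dle unfolding u2_def by simp
  have u2c: "u2 < c0" unfolding u2_def using dp by simp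
  have cont: "\<forall>x. u1 \<le> x \<and> x \<le> u2 \<longrightarrow> isCont f x"
  proof (intro allI impI)
    fix x assume x: "u1 \<le> x \<and> x \<le> u2"
    have "x \<noteq> 0" using x u1p by auto
    moreover have "\<forall>i\<in>N. c i - x \<noteq> 0" using x u2c c0le by fastforce
    ultimately show "isCont f x" unfolding f_def by (intro continuous_intros) auto
  qed
  obtain u where u: "u1 \<le> u" "u \<le> u2" "f u = 0" using IVT2[OF f2 f1 u12 cont] by blast
  show ?thesis
  proof (intro exI conjI ballI)
    show "0 < u" using u u1p by simp
    show "u < c i" if "i \<in> N" for i using u u2c c0le that by fastforce
    show "L0 / u^2 = (\<Sum>i\<in>N. L i / (c i - u)^2)" using u unfolding f_def by simp
  qed
qed

lemma pair_ineq:
  fixes L L' a a' x x' :: real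
  assumes "L > 0" "L' > 0" "a > 0" "a' > 0" "x > 0" "x' > 0"
    and h: "L/x + L'/x' \<le> L/a + L'/a'"
  shows "(a^2/L) * (L*(x-a)^2/(a^2*x) + L'*(x'-a')^2/(a'^2*x'))
         \<le> (x - a) + (a^2/L) * (L'/a'^2) * (x'-a')"
proof -
  have e1: "L/x = L/a - L*(x-a)/a^2 + L*(x-a)^2/(a^2*x)" using assms
    by (simp add: field_simps power2_eq_square)
  have e2: "L'/x' = L'/a' - L'*(x'-a')/a'^2 + L'*(x'-a')^2/(a'^2*x')" using assms
    by (simp add: field_simps power2_eq_square)
  have "L*(x-a)^2/(a^2*x) + L'*(x'-a')^2/(a'^2*x') \<le> L*(x-a)/a^2 + L'*(x'-a')/a'^2"
    using h e1 e2 by linarith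
  hence "(a^2/L) * (L*(x-a)^2/(a^2*x) + L'*(x'-a')^2/(a'^2*x'))
         \<le> (a^2/L) * (L*(x-a)/a^2 + L'*(x'-a')/a'^2)"
    using assms by (intro mult_left_mono) auto
  also have "\<dots> = (x - a) + (a^2/L) * (L'/a'^2) * (x'-a')" using assms
    by (simp add: field_simps)
  finally show ?thesis .
qed



lemma G_nonneg:
  assumes "al i b \<ge> 0" "al (ibest k y b) b \<ge> 0"
  shows "Gfun k y lam al i b \<ge> 0"
  using assms unfolding Gfun_def Let_def by (auto intro!: divide_nonneg_pos add_pos_pos)

lemma G_formula:
  assumes "al i b \<noteq> 0" "al (ibest k y b) b \<noteq> 0"
  shows "Gfun k y lam al i b = (y i b - y (ibest k y b) b)^2 /
           (2 * ((lam i b)^2 / al i b + (lam (ibest k y b) b)^2 / al (ibest k y b) b))"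
  using assms unfolding Gfun_def Let_def by auto

lemma G_pos:
  assumes "al i b > 0" "al (ibest k y b) b > 0" "lam i b > 0" "lam (ibest k y b) b > 0"
    "y i b \<noteq> y (ibest k y b) b"
  shows "Gfun k y lam al i b > 0"
  using assms unfolding Gfun_def Let_def by (auto intro!: divide_pos_pos add_pos_pos)

lemma G_pos_nz:
  assumes "Gfun k y lam al i b > 0"
  shows "al i b \<noteq> 0" "al (ibest k y b) b \<noteq> 0"
  using assms unfolding Gfun_def Let_def by (auto split: if_splits)

lemma G_cong:
  assumes "al i b = al' i b" "al (ibest k y b) b = al' (ibest k y b) b"
  shows "Gfun k y lam al i b = Gfun k y lam al' i b"
  using assms unfolding Gfun_def Let_def by auto

lemma other_index:
  fixes k m :: nat
  assumes "k \<ge> 2" "m < k"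
  obtains j where "j < k" "j \<noteq> m"
proof -
  show ?thesis using assms that[of "if m = 0 then 1 else 0"] by auto
qed

lemma key:
  fixes al be :: "nat \<Rightarrow> nat \<Rightarrow> real"
  assumes k2: "k \<ge> 2" and mk: "\<forall>b<B. ibest k y b < k"
    and ydiff: "\<forall>b<B. \<forall>i<k. i \<noteq> ibest k y b \<longrightarrow> y i b \<noteq> y (ibest k y b) b"
    and lam_pos: "\<forall>i<k. \<forall>b<B. lam i b > 0"
    and fa: "feasible k B al" and fb: "feasible k B be"
    and bal: "balance_cond k B y lam al"
    and apos: "\<forall>i<k. \<forall>b<B. al i b > 0"
    and ge: "\<forall>i<k. \<forall>b<B. i \<noteq> ibest k y b \<longrightarrow> Gfun k y lam be i b \<ge> Gfun k y lam al i b"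
  shows "\<forall>i<k. \<forall>b<B. be i b = al i b"
proof -
  define m where "m = ibest k y"
  define N where "N b = {i. i < k \<and> i \<noteq> m b}" for b
  define L where "L i b = (lam i b)^2" for i b
  define gap where "gap i b = L i b * (be i b - al i b)^2 / ((al i b)^2 * be i b)" for i b
  define R where "R b = (\<Sum>i\<in>N b. ((al i b)^2 / L i b) * (gap i b + gap (m b) b))" for b
  define D where "D b = (\<Sum>i<k. be i b - al i b)" for b
  have finN: "finite (N b)" for b unfolding N_def by auto
  have Lpos: "\<forall>i<k. \<forall>b<B. L i b > 0" using lam_pos unfolding L_def by (metis zero_less_power)
  have bnn: "\<forall>i<k. \<forall>b<B. be i b \<ge> 0" using fb unfolding feasible_def by auto
  have mk': "\<forall>b<B. m b < k" using mk unfolding m_def by auto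
  have Gal: "Gfun k y lam al i b > 0" if "i < k" "b < B" "i \<noteq> m b" for i b
    using that apos lam_pos ydiff mk' unfolding m_def by (intro G_pos) auto
  have Gbe: "Gfun k y lam be i b > 0" if "i < k" "b < B" "i \<noteq> m b" for i b
    using Gal[OF that] ge that unfolding m_def by fastforce
  have bepos: "\<forall>i<k. \<forall>b<B. be i b > 0"
  proof (intro allI impI)
    fix i b assume ib: "i < k" "b < B"
    show "be i b > 0"
    proof (cases "i = m b")
      case False
      have "be i b \<noteq> 0" using G_pos_nz(1)[OF Gbe[OF ib False]] .
      thus ?thesis using bnn ib by force
    next
      case True
      obtain j where j: "j < k" "j \<noteq> m b" using other_index[OF k2 mk'[rule_format, OF ib(2)]] by blast
      have "be (m b) b \<noteq> 0" using G_pos_nz(2)[OF Gbe[OF j(1) ib(2) j(2)]] unfolding m_def by simp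
      thus ?thesis using bnn ib True by force
    qed
  qed
  have gapnn: "gap i b \<ge> 0" if "i < k" "b < B" for i b
    unfolding gap_def using that Lpos[rule_format, OF that] bepos[rule_format, OF that] apos[rule_format, OF that] by (intro divide_nonneg_pos mult_nonneg_nonneg) auto
  have pair: "((al i b)^2 / L i b) * (gap i b + gap (m b) b)
       \<le> (be i b - al i b) + ((al i b)^2 / L i b) * (L (m b) b / (al (m b) b)^2) * (be (m b) b - al (m b) b)"
    if ib: "b < B" "i \<in> N b" for i b
  proof -
    have i: "i < k" "i \<noteq> m b" using ib unfolding N_def by auto
    have mb: "m b < k" using mk' ib by auto
    define dd where "dd = (y i b - y (m b) b)^2"
    have ddp: "dd > 0" unfolding dd_def using ydiff ib i unfolding m_def by auto
    have a1: "al i b > 0" "al (m b) b > 0" "be i b > 0" "be (m b) b > 0" "L i b > 0" "L (m b) b > 0"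
      using apos bepos Lpos i(1) mb ib(1) by auto
    have h1: "Gfun k y lam al i b = dd / (2 * (L i b / al i b + L (m b) b / al (m b) b))"
      unfolding dd_def L_def m_def using a1 unfolding m_def
      by (intro G_formula) auto
    have h2: "Gfun k y lam be i b = dd / (2 * (L i b / be i b + L (m b) b / be (m b) b))"
      unfolding dd_def L_def m_def using a1 unfolding m_def
      by (intro G_formula) auto
    have p1: "L i b / al i b + L (m b) b / al (m b) b > 0"
      using a1 by (intro add_pos_pos divide_pos_pos) auto
    have p2: "L i b / be i b + L (m b) b / be (m b) b > 0"
      using a1 by (intro add_pos_pos divide_pos_pos) auto
    have ineq: "dd / (2 * (L i b / al i b + L (m b) b / al (m b) b))
          \<le> dd / (2 * (L i b / be i b + L (m b) b / be (m b) b))"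
      using ge[rule_format, OF i(1) ib(1) i(2)[unfolded m_def]] h1 h2 unfolding m_def by simp
    have hh: "L i b / be i b + L (m b) b / be (m b) b \<le> L i b / al i b + L (m b) b / al (m b) b"
    proof (rule ccontr)
      assume "\<not> ?thesis"
      hence "2 * (L i b / al i b + L (m b) b / al (m b) b) < 2 * (L i b / be i b + L (m b) b / be (m b) b)"
        by simp
      hence "dd / (2 * (L i b / be i b + L (m b) b / be (m b) b)) < dd / (2 * (L i b / al i b + L (m b) b / al (m b) b))"
        using ddp p1 by (intro divide_strict_left_mono) auto
      thus False using ineq by linarith
    qed
    show ?thesis unfolding gap_def
      using pair_ineq[OF a1(5,6,1,2,3,4) hh] by simp
  qed
  have block: "R b \<le> D b" if b: "b < B" for b
  proof -
    have mb: "m b < k" using mk' b by auto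
    have kk: "{..<k} = insert (m b) (N b)" "m b \<notin> N b" unfolding N_def using mb by auto
    have D1: "D b = (be (m b) b - al (m b) b) + (\<Sum>i\<in>N b. be i b - al i b)"
      unfolding D_def kk(1) using finN kk(2) by simp
    have balb: "(al (m b) b)^2 / L (m b) b = (\<Sum>i\<in>N b. (al i b)^2 / L i b)"
      using bal b unfolding balance_cond_def m_def N_def L_def by auto
    have am: "al (m b) b > 0" "L (m b) b > 0" using apos Lpos mb b by auto
    have "R b \<le> (\<Sum>i\<in>N b. (be i b - al i b) + ((al i b)^2 / L i b) * (L (m b) b / (al (m b) b)^2) * (be (m b) b - al (m b) b))"
      unfolding R_def using pair b by (intro sum_mono) auto
    also have "\<dots> = (\<Sum>i\<in>N b. be i b - al i b) + (\<Sum>i\<in>N b. (al i b)^2 / L i b) * ((L (m b) b / (al (m b) b)^2) * (be (m b) b - al (m b) b))"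
      by (simp only: sum.distrib mult.assoc sum_distrib_right)
    also have "\<dots> = (\<Sum>i\<in>N b. be i b - al i b) + (be (m b) b - al (m b) b)"
      unfolding balb[symmetric] using am by (simp add: field_simps)
    finally show ?thesis using D1 by simp
  qed
  have Rnn: "R b \<ge> 0" if b: "b < B" for b
    unfolding R_def using gapnn b mk' Lpos unfolding N_def
    by (intro sum_nonneg mult_nonneg_nonneg add_nonneg_nonneg divide_nonneg_pos) auto
  have sumD: "(\<Sum>b<B. D b) = 0"
  proof -
    have "(\<Sum>b<B. D b) = (\<Sum>b<B. \<Sum>i<k. be i b) - (\<Sum>b<B. \<Sum>i<k. al i b)"
      unfolding D_def by (simp add: sum_subtractf)
    also have "\<dots> = (\<Sum>i<k. \<Sum>b<B. be i b) - (\<Sum>i<k. \<Sum>b<B. al i b)"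
      by (simp add: sum.swap[of _ "{..<B}"])
    also have "\<dots> = 0" using fa fb unfolding feasible_def by simp
    finally show ?thesis .
  qed
  have D0: "D b = 0" if "b < B" for b
  proof -
    have "\<forall>b\<in>{..<B}. D b = 0"
      using sum_nonneg_eq_0_iff[of "{..<B}" D] sumD block Rnn by force
    thus ?thesis using that by auto
  qed
  have R0: "R b = 0" if "b < B" for b using D0 block Rnn that by force
  have gap0: "gap i b = 0 \<and> gap (m b) b = 0" if ib: "b < B" "i \<in> N b" for i b
  proof -
    have i: "i < k" "i \<noteq> m b" using ib unfolding N_def by auto
    have mb: "m b < k" using mk' ib by auto
    have nn: "\<forall>j\<in>N b. 0 \<le> ((al j b)^2 / L j b) * (gap j b + gap (m b) b)"
      using gapnn ib mb Lpos unfolding N_def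
      by (intro ballI mult_nonneg_nonneg add_nonneg_nonneg divide_nonneg_pos) auto
    have "((al i b)^2 / L i b) * (gap i b + gap (m b) b) = 0"
      using sum_nonneg_eq_0_iff[OF finN[of b], of "\<lambda>j. ((al j b)^2 / L j b) * (gap j b + gap (m b) b)"] nn R0[OF ib(1)] ib(2) unfolding R_def by auto
    moreover have "(al i b)^2 / L i b > 0" using apos[rule_format, OF i(1) ib(1)] Lpos[rule_format, OF i(1) ib(1)] by simp
    ultimately have "gap i b + gap (m b) b = 0" by (metis mult_eq_0_iff less_irrefl)
    thus ?thesis using gapnn i ib mb by (smt (verit))
  qed
  have gapz: "be i b = al i b" if "i < k" "b < B" "gap i b = 0" for i b
  proof -
    have "L i b * (be i b - al i b)^2 / ((al i b)^2 * be i b) = 0" using that unfolding gap_def by simp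
    thus ?thesis using Lpos[rule_format, OF that(1,2)] apos[rule_format, OF that(1,2)] bepos[rule_format, OF that(1,2)] by simp
  qed
  show ?thesis
  proof (intro allI impI)
    fix i b assume ib: "i < k" "b < B"
    show "be i b = al i b"
    proof (cases "i = m b")
      case False
      hence "i \<in> N b" using ib unfolding N_def by auto
      thus ?thesis using gap0 gapz ib by blast
    next
      case True
      obtain j where j: "j < k" "j \<noteq> m b" using other_index[OF k2 mk'[rule_format, OF ib(2)]] by blast
      hence "j \<in> N b" unfolding N_def by auto
      thus ?thesis using gap0 gapz ib True mk' by blast
    qed
  qed
qed



lemma hlp1: "(L::real) > 0 \<Longrightarrow> u > 0 \<Longrightarrow> T > 0 \<Longrightarrow> (L/u/T)^2/L = (L/u^2)/T^2"
  by (simp add: field_simps power2_eq_square)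
lemma hlp2: "(L::real) > 0 \<Longrightarrow> X > 0 \<Longrightarrow> T > 0 \<Longrightarrow> L/X^2/T^2 = (L/X/T)^2/L"
  by (simp add: field_simps power2_eq_square)
lemma hlp3: "(Li::real) > 0 \<Longrightarrow> Lm > 0 \<Longrightarrow> u > 0 \<Longrightarrow> c - u > 0 \<Longrightarrow> T > 0 \<Longrightarrow>
   Li/(Li/(c-u)/T) + Lm/(Lm/u/T) = T*c"
  by (simp add: field_simps)
lemma hlp4: "(w::real) > 0 \<Longrightarrow> dy \<noteq> 0 \<Longrightarrow> T > 0 \<Longrightarrow> w * (dy^2/(2*(T*(w*dy^2/2)))) = 1/T"
  by (simp add: field_simps)

lemma exists_opt:
  fixes w :: "nat \<Rightarrow> nat \<Rightarrow> real"
  assumes k2: "k \<ge> 2" and mk: "\<forall>b<B. ibest k y b < k"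
    and ydiff: "\<forall>b<B. \<forall>i<k. i \<noteq> ibest k y b \<longrightarrow> y i b \<noteq> y (ibest k y b) b"
    and lam_pos: "\<forall>i<k. \<forall>b<B. lam i b > 0"
    and Bp: "B > 0"
    and wpos: "\<forall>i<k. \<forall>b<B. i \<noteq> ibest k y b \<longrightarrow> w i b > 0"
  shows "\<exists>al. feasible k B al \<and> balance_cond k B y lam al \<and> (\<forall>i<k. \<forall>b<B. al i b > 0)
     \<and> (\<exists>z. \<forall>i<k. \<forall>b<B. i \<noteq> ibest k y b \<longrightarrow> w i b * Gfun k y lam al i b = z)"
proof -
  define m where "m = ibest k y"
  define N where "N b = {i. i < k \<and> i \<noteq> m b}" for b
  define L where "L i b = (lam i b)^2" for i b
  define c where "c i b = w i b * (y i b - y (m b) b)^2 / 2" for i b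
  have finN: "finite (N b)" for b unfolding N_def by auto
  have mk': "m b < k" if "b < B" for b using mk that unfolding m_def by auto
  have neN: "N b \<noteq> {}" if bB: "b < B" for b
  proof -
    obtain j where "j < k" "j \<noteq> m b" using other_index[OF k2 mk'[OF bB]] by blast
    thus ?thesis unfolding N_def by auto
  qed
  have Lpos: "L i b > 0" if "i < k" "b < B" for i b
    using lam_pos[rule_format, OF that] unfolding L_def by simp
  have cpos: "c i b > 0" if "i \<in> N b" "b < B" for i b
  proof -
    have i: "i < k" "i \<noteq> ibest k y b" using that unfolding N_def m_def by auto
    have "w i b > 0" using wpos[rule_format, OF i(1) that(2) i(2)] .
    moreover have "y i b \<noteq> y (m b) b" using ydiff[rule_format, OF that(2) i(1) i(2)] unfolding m_def .
    ultimately show ?thesis unfolding c_def by simp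
  qed
  have "\<forall>b. \<exists>u. b < B \<longrightarrow> (0 < u \<and> (\<forall>i\<in>N b. u < c i b) \<and>
          L (m b) b / u^2 = (\<Sum>i\<in>N b. L i b / (c i b - u)^2))"
  proof
    fix b
    show "\<exists>u. b < B \<longrightarrow> (0 < u \<and> (\<forall>i\<in>N b. u < c i b) \<and>
          L (m b) b / u^2 = (\<Sum>i\<in>N b. L i b / (c i b - u)^2))"
    proof (cases "b < B")
      case True
      have "\<forall>i\<in>N b. L i b > 0" using Lpos True unfolding N_def by auto
      moreover have "\<forall>i\<in>N b. c i b > 0" using cpos True by auto
      ultimately show ?thesis
        using root_exists[OF finN neN[OF True] Lpos[OF mk'[OF True] True], of "\<lambda>i. L i b" "\<lambda>i. c i b"]
        by auto
    qed auto
  qed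
  then have "\<exists>u. \<forall>b. b < B \<longrightarrow> (0 < u b \<and> (\<forall>i\<in>N b. u b < c i b) \<and>
          L (m b) b / (u b)^2 = (\<Sum>i\<in>N b. L i b / (c i b - u b)^2))" by (rule choice)
  then obtain u where u': "\<forall>b. b < B \<longrightarrow> (0 < u b \<and> (\<forall>i\<in>N b. u b < c i b) \<and>
          L (m b) b / (u b)^2 = (\<Sum>i\<in>N b. L i b / (c i b - u b)^2))" by (elim exE)
  note u = u'[rule_format]
  define a0 where "a0 i b = (if i = m b then L i b / u b else L i b / (c i b - u b))" for i b
  have a0pos: "a0 i b > 0" if "i < k" "b < B" for i b
  proof (cases "i = m b")
    case True thus ?thesis unfolding a0_def using Lpos[OF that] u[OF that(2)] by simp
  next
    case False
    hence "i \<in> N b" using that unfolding N_def by auto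
    thus ?thesis unfolding a0_def using Lpos[OF that] u[OF that(2)] False by simp
  qed
  define T where "T = (\<Sum>i<k. \<Sum>b<B. a0 i b)"
  have "(0::nat) \<in> {..<k}" "(0::nat) \<in> {..<B}" using k2 Bp by auto
  hence k0: "{..<k} \<noteq> {}" "{..<B} \<noteq> {}" by blast+
  have Tp: "T > 0" unfolding T_def using k0 a0pos
    by (intro sum_pos) auto
  define al where "al i b = a0 i b / T" for i b
  have alpos: "\<forall>i<k. \<forall>b<B. al i b > 0" unfolding al_def using a0pos Tp by simp
  have feas: "feasible k B al"
    unfolding feasible_def
  proof
    show "\<forall>i<k. \<forall>b<B. 0 \<le> al i b" using alpos by (simp add: less_imp_le)
    have "(\<Sum>i<k. \<Sum>b<B. al i b) = (\<Sum>i<k. \<Sum>b<B. a0 i b) / T"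
      unfolding al_def by (simp add: sum_divide_distrib)
    thus "(\<Sum>i<k. \<Sum>b<B. al i b) = 1" using Tp unfolding T_def by simp
  qed
  have bal: "balance_cond k B y lam al"
    unfolding balance_cond_def
  proof (intro allI impI)
    fix b assume b: "b < B"
    have NN: "{i. i < k \<and> i \<noteq> ibest k y b} = N b" unfolding N_def m_def by simp
    have ueq: "L (m b) b / (u b)^2 = (\<Sum>i\<in>N b. L i b / (c i b - u b)^2)" using u[OF b] by blast
    have "(al (m b) b)^2 / L (m b) b = (L (m b) b / (u b)^2) / T^2"
      unfolding al_def a0_def using hlp1[OF Lpos[OF mk'[OF b] b] _ Tp] u[OF b, THEN conjunct1]
      by simp
    also have "\<dots> = (\<Sum>i\<in>N b. L i b / (c i b - u b)^2) / T^2" by (simp only: ueq)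
    also have "\<dots> = (\<Sum>i\<in>N b. (al i b)^2 / L i b)"
      unfolding sum_divide_distrib
    proof (rule sum.cong)
      fix i assume i: "i \<in> N b"
      have ik: "i < k" "i \<noteq> m b" using i unfolding N_def by auto
      have "c i b - u b > 0" using u[OF b] i by auto
      thus "L i b / (c i b - u b)^2 / T^2 = (al i b)^2 / L i b"
        unfolding al_def a0_def using ik hlp2[OF Lpos[OF ik(1) b] \<open>c i b - u b > 0\<close> Tp]
        by simp
    qed simp
    finally show "(al (ibest k y b) b)^2 / (lam (ibest k y b) b)^2 =
        (\<Sum>i\<in>{i. i < k \<and> i \<noteq> ibest k y b}. (al i b)^2 / (lam i b)^2)"
      unfolding NN unfolding L_def m_def .
  qed
  have eq: "\<forall>i<k. \<forall>b<B. i \<noteq> ibest k y b \<longrightarrow> w i b * Gfun k y lam al i b = 1 / T"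
  proof (intro allI impI)
    fix i b assume ib: "i < k" "b < B" "i \<noteq> ibest k y b"
    have i: "i \<in> N b" "i \<noteq> m b" using ib unfolding N_def m_def by auto
    have mb: "m b < k" using mk' ib by auto
    have cu: "c i b - u b > 0" using u[OF ib(2)] i by auto
    have G: "Gfun k y lam al i b = (y i b - y (m b) b)^2 / (2 * (L i b / al i b + L (m b) b / al (m b) b))"
      unfolding L_def m_def using alpos[rule_format, OF ib(1,2)] alpos[rule_format, OF mb ib(2)] unfolding m_def by (intro G_formula) auto
    have "L i b / al i b + L (m b) b / al (m b) b = T * c i b"
      unfolding al_def a0_def using i(2) hlp3[OF Lpos[OF ib(1,2)] Lpos[OF mb ib(2)] _ cu Tp] u[OF ib(2)]
      by simp
    hence "Gfun k y lam al i b = (y i b - y (m b) b)^2 / (2 * (T * c i b))" using G by simp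
    moreover have "w i b > 0" using wpos ib by auto
    moreover have "y i b \<noteq> y (m b) b" using ydiff ib unfolding m_def by auto
    ultimately show "w i b * Gfun k y lam al i b = 1 / T"
      unfolding c_def using hlp4[OF _ _ Tp] by simp
  qed
  show ?thesis using feas bal alpos eq by blast
qed



lemma balance_cong:
  assumes "\<forall>i<k. \<forall>b<B. al i b = al' i b" "\<forall>b<B. ibest k y b < k"
  shows "balance_cond k B y lam al = balance_cond k B y lam al'"
proof -
  have "(al (ibest k y b) b)^2 / (lam (ibest k y b) b)^2
            = (\<Sum>i\<in>{i. i < k \<and> i \<noteq> ibest k y b}. (al i b)^2 / (lam i b)^2)
     \<longleftrightarrow> (al' (ibest k y b) b)^2 / (lam (ibest k y b) b)^2
            = (\<Sum>i\<in>{i. i < k \<and> i \<noteq> ibest k y b}. (al' i b)^2 / (lam i b)^2)"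
    if b: "b < B" for b
  proof -
    have "al (ibest k y b) b = al' (ibest k y b) b" using assms b by auto
    moreover have "(\<Sum>i\<in>{i. i < k \<and> i \<noteq> ibest k y b}. (al i b)^2 / (lam i b)^2)
       = (\<Sum>i\<in>{i. i < k \<and> i \<noteq> ibest k y b}. (al' i b)^2 / (lam i b)^2)"
      using assms(1) b by (intro sum.cong) auto
    ultimately show ?thesis by simp
  qed
  thus ?thesis unfolding balance_cond_def by auto
qed

lemma equal_condD:
  assumes "equal_cond S W G" "(i, b) \<in> S" "(j, b') \<in> S"
  shows "W i b * G i b = W j b' * G j b'"
  using assms unfolding equal_cond_def by fast

lemma equal_condI:
  assumes "\<And>i b j b'. (i, b) \<in> S \<Longrightarrow> (j, b') \<in> S \<Longrightarrow> W i b * G i b = W j b' * G j b'"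
  shows "equal_cond S W G"
  using assms unfolding equal_cond_def by fast

lemma abstract_main:
  fixes w al :: "nat \<Rightarrow> nat \<Rightarrow> real"
  assumes k2: "k \<ge> 2" and mk: "\<forall>b<B. ibest k y b < k"
    and ydiff: "\<forall>b<B. \<forall>i<k. i \<noteq> ibest k y b \<longrightarrow> y i b \<noteq> y (ibest k y b) b"
    and lam_pos: "\<forall>i<k. \<forall>b<B. lam i b > 0"
    and wpos: "\<forall>i<k. \<forall>b<B. i \<noteq> ibest k y b \<longrightarrow> w i b > 0"
    and feas: "feasible k B al"
    and S_def: "S = {(i, b). i < k \<and> b < B \<and> i \<noteq> ibest k y b}"
    and F_def: "\<And>a. F a = Min ((\<lambda>(i, b). w i b * Gfun k y lam a i b) ` S)"
  shows "(\<forall>al'. feasible k B al' \<longrightarrow> F al' \<le> F al) \<longleftrightarrow>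
         balance_cond k B y lam al \<and> equal_cond S w (Gfun k y lam al)"
proof -
  have Bp: "B > 0"
  proof (rule ccontr)
    assume "\<not> B > 0" hence "B = 0" by simp
    thus False using feas unfolding feasible_def by simp
  qed
  have finS: "finite S" unfolding S_def
    by (rule finite_subset[of _ "{..<k} \<times> {..<B}"]) auto
  obtain j0 where j0: "j0 < k" "j0 \<noteq> ibest k y 0" using other_index[OF k2] mk Bp by blast
  have neS: "S \<noteq> {}" unfolding S_def using j0 Bp by auto
  have Fle: "F a \<le> w i b * Gfun k y lam a i b" if "(i, b) \<in> S" for a i b
    unfolding F_def using finS that by (intro Min_le) auto
  have Fin: "\<exists>(i, b)\<in>S. F a = w i b * Gfun k y lam a i b" for a
  proof -
    have "F a \<in> (\<lambda>(i, b). w i b * Gfun k y lam a i b) ` S" unfolding F_def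
      using finS neS by (intro Min_in) auto
    thus ?thesis by auto
  qed
  have Fcong: "F a = F a'" if "\<forall>i<k. \<forall>b<B. a i b = a' i b" for a a'
  proof -
    have "(\<lambda>(i, b). w i b * Gfun k y lam a i b) ` S = (\<lambda>(i, b). w i b * Gfun k y lam a' i b) ` S"
    proof (rule image_cong[OF refl])
      fix x assume x: "x \<in> S"
      then obtain i b where ib: "x = (i, b)" "i < k" "b < B" "i \<noteq> ibest k y b" unfolding S_def by auto
      have "Gfun k y lam a i b = Gfun k y lam a' i b"
        using that ib mk by (intro G_cong) auto
      thus "(\<lambda>(i, b). w i b * Gfun k y lam a i b) x = (\<lambda>(i, b). w i b * Gfun k y lam a' i b) x"
        using ib by simp
    qed
    thus ?thesis unfolding F_def by simp
  qed
  have nn: "\<forall>i<k. \<forall>b<B. al i b \<ge> 0" using feas unfolding feasible_def by auto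
  have suff: "\<forall>al'. feasible k B al' \<longrightarrow> F al' \<le> F al"
    if bal: "balance_cond k B y lam al" and eqc: "equal_cond S w (Gfun k y lam al)"
  proof -
    define z where "z = F al"
    have allz: "w i b * Gfun k y lam al i b = z" if "(i, b) \<in> S" for i b
    proof -
      obtain i0 b0 where i0: "(i0, b0) \<in> S" "F al = w i0 b0 * Gfun k y lam al i0 b0" using Fin by blast
      show ?thesis using equal_condD[OF eqc that i0(1)] i0(2) unfolding z_def by simp
    qed
    have zpos: "z > 0"
    proof (rule ccontr)
      assume "\<not> z > 0"
      have G0: "Gfun k y lam al i b = 0" if "i < k" "b < B" "i \<noteq> ibest k y b" for i b
      proof -
        have S: "(i, b) \<in> S" unfolding S_def using that by auto
        have "w i b > 0" using wpos[rule_format, OF that] by simp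
        moreover have "Gfun k y lam al i b \<ge> 0"
          using nn[rule_format, OF that(1,2)] nn[rule_format, OF mk[rule_format, OF that(2)] that(2)]
          by (intro G_nonneg)
        ultimately have "w i b * Gfun k y lam al i b \<ge> 0" by simp
        hence "w i b * Gfun k y lam al i b = 0" using allz[OF S] \<open>\<not> z > 0\<close> by linarith
        thus ?thesis using \<open>w i b > 0\<close> by simp
      qed
      have zero: "al i b = 0" if ib: "i < k" "b < B" for i b
      proof -
        define mb where "mb = ibest k y b"
        have mbk: "mb < k" using mk ib unfolding mb_def by auto
        define N where "N = {i. i < k \<and> i \<noteq> mb}"
        have finN: "finite N" unfolding N_def by auto
        have balb: "(al mb b)^2 / (lam mb b)^2 = (\<Sum>i\<in>N. (al i b)^2 / (lam i b)^2)"
          using bal ib unfolding balance_cond_def N_def mb_def by auto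
        have tnn: "\<forall>j\<in>N. (al j b)^2 / (lam j b)^2 \<ge> 0" by auto
        have amz: "al mb b = 0"
        proof (rule ccontr)
          assume "al mb b \<noteq> 0"
          hence amp: "al mb b > 0" using nn mbk ib by force
          have "(al mb b)^2 / (lam mb b)^2 > 0" using amp lam_pos[rule_format, OF mbk ib(2)] by simp
          hence "(\<Sum>i\<in>N. (al i b)^2 / (lam i b)^2) \<noteq> 0" using balb by simp
          then obtain j where j: "j \<in> N" "(al j b)^2 / (lam j b)^2 \<noteq> 0"
            by (meson sum.not_neutral_contains_not_neutral)
          have jk: "j < k" "j \<noteq> mb" using j(1) unfolding N_def by auto
          have "al j b \<noteq> 0" using j(2) by auto
          hence ajp: "al j b > 0" using nn jk ib by force
          have "Gfun k y lam al j b > 0"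
            using ajp amp lam_pos jk mbk ib ydiff unfolding mb_def by (intro G_pos) auto
          thus False using G0[OF jk(1) ib(2)] jk unfolding mb_def by simp
        qed
        show ?thesis
        proof (cases "i = mb")
          case True thus ?thesis using amz by simp
        next
          case False
          have "\<forall>j\<in>N. (al j b)^2 / (lam j b)^2 = 0"
            using sum_nonneg_eq_0_iff[OF finN, of "\<lambda>j. (al j b)^2 / (lam j b)^2"] tnn balb amz by auto
          moreover have "i \<in> N" unfolding N_def using False ib by auto
          ultimately show ?thesis using lam_pos[rule_format, OF ib] by auto
        qed
      qed
      have "(\<Sum>i<k. \<Sum>b<B. al i b) = 0" using zero by simp
      thus False using feas unfolding feasible_def by simp
    qed
    have Galpos: "Gfun k y lam al i b > 0" if "(i, b) \<in> S" for i b
    proof -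
      have ib: "i < k" "b < B" "i \<noteq> ibest k y b" using that unfolding S_def by auto
      have "w i b > 0" using wpos[rule_format, OF ib] by simp
      moreover have "0 < w i b * Gfun k y lam al i b" using allz[OF that] zpos by simp
      ultimately show ?thesis using zero_less_mult_pos by blast
    qed
    have apos: "\<forall>i<k. \<forall>b<B. al i b > 0"
    proof (intro allI impI)
      fix i b assume ib: "i < k" "b < B"
      show "al i b > 0"
      proof (cases "i = ibest k y b")
        case False
        hence "(i, b) \<in> S" unfolding S_def using ib by auto
        hence "al i b \<noteq> 0" using G_pos_nz(1)[OF Galpos] by blast
        thus ?thesis using nn ib by force
      next
        case True
        obtain j where j: "j < k" "j \<noteq> ibest k y b" using other_index[OF k2] mk ib by blast
        hence "(j, b) \<in> S" unfolding S_def using ib by auto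
        hence "al (ibest k y b) b \<noteq> 0" using G_pos_nz(2)[OF Galpos] by blast
        thus ?thesis using nn ib True by force
      qed
    qed
    show ?thesis
    proof (intro allI impI)
      fix al' assume fa': "feasible k B al'"
      show "F al' \<le> F al"
      proof (rule ccontr)
        assume "\<not> F al' \<le> F al"
        hence gt: "F al' > z" unfolding z_def by simp
        have ge: "\<forall>i<k. \<forall>b<B. i \<noteq> ibest k y b \<longrightarrow> Gfun k y lam al' i b \<ge> Gfun k y lam al i b"
        proof (intro allI impI)
          fix i b assume ib: "i < k" "b < B" "i \<noteq> ibest k y b"
          hence S: "(i, b) \<in> S" unfolding S_def by auto
          have "w i b * Gfun k y lam al' i b > w i b * Gfun k y lam al i b"
            using Fle[OF S, of al'] gt allz[OF S] by linarith
          moreover have "w i b > 0" using wpos[rule_format, OF ib] by simp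
          ultimately show "Gfun k y lam al' i b \<ge> Gfun k y lam al i b"
            by (simp add: mult_less_cancel_left_pos)
        qed
        have same: "\<forall>i<k. \<forall>b<B. al' i b = al i b"
          using key[OF k2 mk ydiff lam_pos feas fa' bal apos ge] .
        have "F al' = F al" using Fcong[OF same] .
        thus False using gt unfolding z_def by simp
      qed
    qed
  qed
  have nec: "balance_cond k B y lam al \<and> equal_cond S w (Gfun k y lam al)"
    if opt: "\<forall>al'. feasible k B al' \<longrightarrow> F al' \<le> F al"
  proof -
    obtain as where as: "feasible k B as" "balance_cond k B y lam as" "\<forall>i<k. \<forall>b<B. as i b > 0"
      and zs: "\<exists>z. \<forall>i<k. \<forall>b<B. i \<noteq> ibest k y b \<longrightarrow> w i b * Gfun k y lam as i b = z"
      using exists_opt[OF k2 mk ydiff lam_pos Bp wpos] by blast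
    obtain z where z: "\<forall>i<k. \<forall>b<B. i \<noteq> ibest k y b \<longrightarrow> w i b * Gfun k y lam as i b = z"
      using zs by blast
    have eqs: "equal_cond S w (Gfun k y lam as)"
      unfolding equal_cond_def S_def using z by auto
    have Fas: "F as = z"
    proof -
      obtain i b where "(i, b) \<in> S" "F as = w i b * Gfun k y lam as i b" using Fin by blast
      thus ?thesis using z unfolding S_def by auto
    qed
    have ge: "\<forall>i<k. \<forall>b<B. i \<noteq> ibest k y b \<longrightarrow> Gfun k y lam al i b \<ge> Gfun k y lam as i b"
    proof (intro allI impI)
      fix i b assume ib: "i < k" "b < B" "i \<noteq> ibest k y b"
      hence S: "(i, b) \<in> S" unfolding S_def by auto
      have "F as \<le> F al" using opt as(1) by blast
      moreover have "w i b * Gfun k y lam as i b = z" using z ib by blast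
      ultimately have "w i b * Gfun k y lam al i b \<ge> w i b * Gfun k y lam as i b"
        using Fle[OF S, of al] Fas by linarith
      moreover have "w i b > 0" using wpos[rule_format, OF ib] by simp
      ultimately show "Gfun k y lam al i b \<ge> Gfun k y lam as i b"
        by (simp add: mult_le_cancel_left_pos)
    qed
    have same: "\<forall>i<k. \<forall>b<B. al i b = as i b"
      using key[OF k2 mk ydiff lam_pos as(1) feas as(2) as(3) ge] .
    have "balance_cond k B y lam al" using balance_cong[OF same mk] as(2) by simp
    moreover have "equal_cond S w (Gfun k y lam al)"
    proof -
      have "Gfun k y lam al i b = Gfun k y lam as i b" if "(i, b) \<in> S" for i b
        using that same mk unfolding S_def by (intro G_cong) auto
      thus ?thesis using equal_condD[OF eqs] by (intro equal_condI) metis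
    qed
    ultimately show ?thesis ..
  qed
  show ?thesis using suff nec by blast
qed



lemma Min_eq_dom:
  fixes D E :: "real set"
  assumes "finite E" "D \<subseteq> E" "D \<noteq> {}" "\<forall>e\<in>E. \<exists>d\<in>D. d \<le> e"
  shows "Min E = Min D"
proof -
  have fD: "finite D" using assms(1,2) finite_subset by blast
  have nE: "E \<noteq> {}" using assms(2,3) by blast
  have "Min D \<in> D" using fD assms(3) by simp
  hence "Min E \<le> Min D" using assms(1,2) by (intro Min_le) auto
  moreover have "Min D \<le> Min E"
  proof -
    have "Min E \<in> E" using assms(1) nE by simp
    then obtain d where "d \<in> D" "d \<le> Min E" using assms(4) by blast
    moreover have "Min D \<le> d" using fD \<open>d \<in> D\<close> by simp
    ultimately show ?thesis by linarith
  qed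
  ultimately show ?thesis by linarith
qed

lemma ibest_props:
  assumes "\<exists>i<k. \<forall>j<k. j \<noteq> i \<longrightarrow> y i b < y j b"
  shows "ibest k y b < k \<and> (\<forall>j<k. j \<noteq> ibest k y b \<longrightarrow> y (ibest k y b) b < y j b)"
proof -
  have ex1: "\<exists>!i. i < k \<and> (\<forall>j<k. j \<noteq> i \<longrightarrow> y i b < y j b)"
  proof -
    obtain i where i: "i < k" "\<forall>j<k. j \<noteq> i \<longrightarrow> y i b < y j b" using assms by blast
    show ?thesis
    proof (rule ex1I[of _ i])
      show "i < k \<and> (\<forall>j<k. j \<noteq> i \<longrightarrow> y i b < y j b)" using i by blast
      fix i' assume i': "i' < k \<and> (\<forall>j<k. j \<noteq> i' \<longrightarrow> y i' b < y j b)"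
      show "i' = i"
      proof (rule ccontr)
        assume "i' \<noteq> i"
        hence "y i' b < y i b" "y i b < y i' b" using i i' by auto
        thus False by simp
      qed
    qed
  qed
  show ?thesis unfolding ibest_def using theI'[OF ex1] by blast
qed

lemma istar_lt:
  assumes "\<exists>i<k. \<forall>j<k. j \<noteq> i \<longrightarrow> freq k B p y j < freq k B p y i"
  shows "istar k B p y < k"
proof -
  have ex1: "\<exists>!i. i < k \<and> (\<forall>j<k. j \<noteq> i \<longrightarrow> freq k B p y j < freq k B p y i)"
  proof -
    obtain i where i: "i < k" "\<forall>j<k. j \<noteq> i \<longrightarrow> freq k B p y j < freq k B p y i" using assms by blast
    show ?thesis
    proof (rule ex1I[of _ i])
      show "i < k \<and> (\<forall>j<k. j \<noteq> i \<longrightarrow> freq k B p y j < freq k B p y i)" using i by blast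
      fix i' assume i': "i' < k \<and> (\<forall>j<k. j \<noteq> i' \<longrightarrow> freq k B p y j < freq k B p y i')"
      show "i' = i"
      proof (rule ccontr)
        assume "i' \<noteq> i"
        hence "freq k B p y i' < freq k B p y i" "freq k B p y i < freq k B p y i'" using i i' by auto
        thus False by simp
      qed
    qed
  qed
  show ?thesis unfolding istar_def using theI'[OF ex1] by blast
qed

lemma setb_img: "{f i b | i b. P i b} = (\<lambda>(i, b). f i b) ` {(i, b). P i b}"
  by auto

lemma setb_img1: "{f b | b. P b} = f ` {b. P b}"
  by auto

lemma le_mult_ge1: "(1::real) \<le> W \<Longrightarrow> 0 \<le> G \<Longrightarrow> G \<le> W * G"
  using mult_right_mono[of 1 W G] by simp

lemma Wfun_ge1: "Wfun k B p y i b \<ge> 1"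
  unfolding Wfun_def by auto

lemma WACC_ge1: "WACC k B p y i b \<ge> 1"
  unfolding WACC_def using Wfun_ge1 by simp

lemma WFN_ge1: "WFN k B p y i b \<ge> 1"
  unfolding WFN_def using Wfun_ge1 by simp

theorem theorem5:
  fixes k B :: nat and p :: "nat \<Rightarrow> real" and y lam al :: "nat \<Rightarrow> nat \<Rightarrow> real"
  assumes k2: "k \<ge> 2"
    and p_pos: "\<forall>b<B. p b > 0"
    and p_sum: "(\<Sum>b<B. p b) = 1"
    and lam_pos: "\<forall>i<k. \<forall>b<B. lam i b > 0"
    and best_unique: "\<forall>b<B. \<exists>i<k. \<forall>j<k. j \<noteq> i \<longrightarrow> y i b < y j b"
    and istar_unique: "\<exists>i<k. \<forall>j<k. j \<noteq> i \<longrightarrow> freq k B p y j < freq k B p y i"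
    and feas: "feasible k B al"
  shows "(optimal k B (objACC k B p y lam) al \<longleftrightarrow>
            balance_cond k B y lam al \<and>
            equal_cond (Xi k B p y \<union> Xiadv k B p y) (WACC k B p y) (Gfun k y lam al))
       \<and> (optimal k B (objFN k B p y lam) al \<longleftrightarrow>
            balance_cond k B y lam al \<and>
            equal_cond (Xi k B p y \<union> Xiadv k B p y) (WFN k B p y) (Gfun k y lam al))"
proof -
  have ib: "ibest k y b < k \<and> (\<forall>j<k. j \<noteq> ibest k y b \<longrightarrow> y (ibest k y b) b < y j b)"
    if "b < B" for b using ibest_props[of k y b, OF best_unique[rule_format, OF that]] .
  have mk: "\<forall>b<B. ibest k y b < k" using ib by blast
  have ydiff: "\<forall>b<B. \<forall>i<k. i \<noteq> ibest k y b \<longrightarrow> y i b \<noteq> y (ibest k y b) b"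
  proof (intro allI impI)
    fix b i assume "b < B" "i < k" "i \<noteq> ibest k y b"
    thus "y i b \<noteq> y (ibest k y b) b" using ib[of b] by (metis less_irrefl)
  qed
  define ist where "ist = istar k B p y"
  have isk: "ist < k" unfolding ist_def using istar_lt[OF istar_unique] .
  define S where "S = {(i, b). i < k \<and> b < B \<and> i \<noteq> ibest k y b}"
  have Th: "b \<in> Theta k B y ist \<longleftrightarrow> b < B \<and> ibest k y b = ist" for b
    unfolding Theta_def by simp
  have Xi_eq: "Xi k B p y = {(i, b). i < k \<and> b < B \<and> i \<noteq> ist \<and> i \<noteq> ibest k y b}"
    unfolding Xi_def ist_def by simp
  have Xiadv_eq: "Xiadv k B p y = {(i, b). i = ist \<and> b < B \<and> b \<notin> Theta k B y ist}"
    unfolding Xiadv_def ist_def by simp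
  have SU: "Xi k B p y \<union> Xiadv k B p y = S"
    unfolding Xi_eq Xiadv_eq S_def Th using isk by auto
  have finS: "finite S" unfolding S_def
    by (rule finite_subset[of _ "{..<k} \<times> {..<B}"]) auto
  have Bp: "B > 0" using p_sum by (cases B) auto
  obtain j0 where j0: "j0 < k" "j0 \<noteq> ibest k y 0" using other_index[OF k2] mk Bp by blast
  have neS: "S \<noteq> {}" unfolding S_def using j0 Bp by auto
  have Gnn: "Gfun k y lam a i b \<ge> 0" if "feasible k B a" "i < k" "b < B" for a i b
  proof -
    have "\<forall>i<k. \<forall>b<B. a i b \<ge> 0" using that(1) unfolding feasible_def by blast
    thus ?thesis using that(2,3) mk[rule_format, OF that(3)] by (intro G_nonneg) blast+
  qed
  define FA where "FA a = Min ((\<lambda>(i, b). WACC k B p y i b * Gfun k y lam a i b) ` S)" for a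
  define FF where "FF a = Min ((\<lambda>(i, b). WFN k B p y i b * Gfun k y lam a i b) ` S)" for a
  have WACC_pos: "\<forall>i<k. \<forall>b<B. i \<noteq> ibest k y b \<longrightarrow> WACC k B p y i b > 0"
    using WACC_ge1 by (meson less_le_trans zero_less_one)
  have WFN_pos: "\<forall>i<k. \<forall>b<B. i \<noteq> ibest k y b \<longrightarrow> WFN k B p y i b > 0"
    using WFN_ge1 by (meson less_le_trans zero_less_one)
  have A: "(\<forall>al'. feasible k B al' \<longrightarrow> FA al' \<le> FA al) \<longleftrightarrow>
         balance_cond k B y lam al \<and> equal_cond S (WACC k B p y) (Gfun k y lam al)"
    by (rule abstract_main[OF k2 mk ydiff lam_pos WACC_pos feas S_def FA_def])
  have F: "(\<forall>al'. feasible k B al' \<longrightarrow> FF al' \<le> FF al) \<longleftrightarrow>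
         balance_cond k B y lam al \<and> equal_cond S (WFN k B p y) (Gfun k y lam al)"
    by (rule abstract_main[OF k2 mk ydiff lam_pos WFN_pos feas S_def FF_def])
  have objA: "objACC k B p y lam a = FA a" if fa: "feasible k B a" for a
  proof -
    define E1 where "E1 = {Wfun k B p y i b * Gfun k y lam a i b | i b. (i, b) \<in> Xi k B p y}"
    define E2 where "E2 = {Gfun k y lam a i b | i b. i < k \<and> i \<noteq> ist \<and> b \<in> Theta k B y ist}"
    define E3 where "E3 = {Gfun k y lam a ist b | b. b < B \<and> b \<notin> Theta k B y ist}"
    define D where "D = (\<lambda>(i, b). WACC k B p y i b * Gfun k y lam a i b) ` S"
    have o: "objACC k B p y lam a = Min (E1 \<union> E2 \<union> E3)"
      unfolding objACC_def E1_def E2_def E3_def ist_def ..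
    have XiS: "Xi k B p y \<subseteq> S" using SU by blast
    have fE1: "finite E1" unfolding E1_def setb_img
      using finite_subset[OF XiS finS] by simp
    have fE2: "finite E2" unfolding E2_def setb_img
      by (rule finite_imageI, rule finite_subset[of _ "{..<k} \<times> {..<B}"]) (auto simp: Th)
    have fE3: "finite E3" unfolding E3_def setb_img1 by simp
    have WTh: "WACC k B p y i b = 1" if "b \<in> Theta k B y ist" for i b
      using that unfolding WACC_def ist_def by simp
    have Wadv: "WACC k B p y i b = 1" if "(i, b) \<in> Xiadv k B p y" for i b
      using that unfolding WACC_def by simp
    have Woth: "WACC k B p y i b = Wfun k B p y i b" if "b \<notin> Theta k B y ist" "(i, b) \<notin> Xiadv k B p y" for i b
      using that unfolding WACC_def ist_def by simp
    have DE: "D \<subseteq> E1 \<union> E2 \<union> E3"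
    proof
      fix x assume "x \<in> D"
      then obtain i b where x: "x = WACC k B p y i b * Gfun k y lam a i b" and iS: "(i, b) \<in> S"
        unfolding D_def by auto
      have i: "i < k" "b < B" "i \<noteq> ibest k y b" using iS unfolding S_def by auto
      show "x \<in> E1 \<union> E2 \<union> E3"
      proof (cases "b \<in> Theta k B y ist")
        case True
        hence "i \<noteq> ist" using i Th by auto
        hence "Gfun k y lam a i b \<in> E2" unfolding E2_def using i True by blast
        thus ?thesis using x WTh[OF True] by simp
      next
        case False
        show ?thesis
        proof (cases "i = ist")
          case True
          hence adv: "(i, b) \<in> Xiadv k B p y" unfolding Xiadv_eq using False i by simp
          have "Gfun k y lam a ist b \<in> E3" unfolding E3_def using i False by blast
          thus ?thesis using x Wadv[OF adv] True by simp
        next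
          case ni: False
          hence nadv: "(i, b) \<notin> Xiadv k B p y" unfolding Xiadv_eq by simp
          have xi: "(i, b) \<in> Xi k B p y" unfolding Xi_eq using i ni by simp
          have "Wfun k B p y i b * Gfun k y lam a i b \<in> E1" unfolding E1_def using xi by blast
          thus ?thesis using x Woth[OF False nadv] by simp
        qed
      qed
    qed
    have dom: "\<forall>e\<in>E1 \<union> E2 \<union> E3. \<exists>d\<in>D. d \<le> e"
    proof
      fix e assume e: "e \<in> E1 \<union> E2 \<union> E3"
      show "\<exists>d\<in>D. d \<le> e"
      proof (cases "e \<in> E1")
        case True
        then obtain i b where ee: "e = Wfun k B p y i b * Gfun k y lam a i b" and xi: "(i, b) \<in> Xi k B p y"
          unfolding E1_def by blast
        have iS: "(i, b) \<in> S" using xi XiS by blast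
        have i: "i < k" "b < B" "i \<noteq> ist" using xi unfolding Xi_eq by auto
        have g: "Gfun k y lam a i b \<ge> 0" using Gnn[OF fa i(1,2)] .
        show ?thesis
        proof (cases "b \<in> Theta k B y ist")
          case True
          have "WACC k B p y i b * Gfun k y lam a i b \<in> D" unfolding D_def using iS by force
          moreover have "WACC k B p y i b * Gfun k y lam a i b \<le> e"
            using WTh[OF True] ee le_mult_ge1[OF Wfun_ge1 g] by simp
          ultimately show ?thesis by blast
        next
          case False
          have nadv: "(i, b) \<notin> Xiadv k B p y" unfolding Xiadv_eq using i by simp
          have "WACC k B p y i b * Gfun k y lam a i b \<in> D" unfolding D_def using iS by force
          thus ?thesis using Woth[OF False nadv] ee by auto
        qed
      next
        case nE1: False
        show ?thesis
        proof (cases "e \<in> E2")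
          case True
          then obtain i b where ee: "e = Gfun k y lam a i b" and i: "i < k" "i \<noteq> ist" "b \<in> Theta k B y ist"
            unfolding E2_def by blast
          have iS: "(i, b) \<in> S" using i Th unfolding S_def by auto
          have "WACC k B p y i b * Gfun k y lam a i b \<in> D" unfolding D_def using iS by force
          thus ?thesis using WTh[OF i(3)] ee by auto
        next
          case False
          hence "e \<in> E3" using e nE1 by blast
          then obtain b where ee: "e = Gfun k y lam a ist b" and b: "b < B" "b \<notin> Theta k B y ist"
            unfolding E3_def by blast
          have adv: "(ist, b) \<in> Xiadv k B p y" unfolding Xiadv_eq using b by simp
          have iS: "(ist, b) \<in> S" using adv SU by blast
          have "WACC k B p y ist b * Gfun k y lam a ist b \<in> D" unfolding D_def using iS by force
          thus ?thesis using Wadv[OF adv] ee by auto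
        qed
      qed
    qed
    have neD: "D \<noteq> {}" unfolding D_def using neS by simp
    have "Min (E1 \<union> E2 \<union> E3) = Min D"
      using Min_eq_dom[OF _ DE neD dom] fE1 fE2 fE3 by simp
    thus ?thesis using o unfolding FA_def D_def by simp
  qed
  have objF: "objFN k B p y lam a = FF a" if fa: "feasible k B a" for a
  proof -
    define E1 where "E1 = {Wfun k B p y i b * Gfun k y lam a i b | i b. (i, b) \<in> Xi k B p y}"
    define E3 where "E3 = {Gfun k y lam a ist b | b. b < B \<and> b \<notin> Theta k B y ist}"
    define D where "D = (\<lambda>(i, b). WFN k B p y i b * Gfun k y lam a i b) ` S"
    have o: "objFN k B p y lam a = Min (E1 \<union> E3)"
      unfolding objFN_def E1_def E3_def ist_def ..
    have XiS: "Xi k B p y \<subseteq> S" using SU by blast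
    have fE1: "finite E1" unfolding E1_def setb_img
      using finite_subset[OF XiS finS] by simp
    have fE3: "finite E3" unfolding E3_def setb_img1 by simp
    have WXi: "WFN k B p y i b = Wfun k B p y i b" if "(i, b) \<in> Xi k B p y" for i b
      using that unfolding WFN_def by simp
    have WnXi: "WFN k B p y i b = 1" if "(i, b) \<notin> Xi k B p y" for i b
      using that unfolding WFN_def by simp
    have DE: "D \<subseteq> E1 \<union> E3"
    proof
      fix x assume "x \<in> D"
      then obtain i b where x: "x = WFN k B p y i b * Gfun k y lam a i b" and iS: "(i, b) \<in> S"
        unfolding D_def by auto
      show "x \<in> E1 \<union> E3"
      proof (cases "(i, b) \<in> Xi k B p y")
        case True
        have "Wfun k B p y i b * Gfun k y lam a i b \<in> E1" unfolding E1_def using True by blast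
        thus ?thesis using x WXi[OF True] by simp
      next
        case False
        hence adv: "(i, b) \<in> Xiadv k B p y" using iS SU by blast
        hence "i = ist" "b < B" "b \<notin> Theta k B y ist" unfolding Xiadv_eq by auto
        hence "Gfun k y lam a i b \<in> E3" unfolding E3_def by blast
        thus ?thesis using x WnXi[OF False] by simp
      qed
    qed
    have dom: "\<forall>e\<in>E1 \<union> E3. \<exists>d\<in>D. d \<le> e"
    proof
      fix e assume e: "e \<in> E1 \<union> E3"
      show "\<exists>d\<in>D. d \<le> e"
      proof (cases "e \<in> E1")
        case True
        then obtain i b where ee: "e = Wfun k B p y i b * Gfun k y lam a i b" and xi: "(i, b) \<in> Xi k B p y"
          unfolding E1_def by blast
        have iS: "(i, b) \<in> S" using xi XiS by blast
        have "WFN k B p y i b * Gfun k y lam a i b \<in> D" unfolding D_def using iS by force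
        thus ?thesis using WXi[OF xi] ee by auto
      next
        case False
        hence "e \<in> E3" using e by blast
        then obtain b where ee: "e = Gfun k y lam a ist b" and b: "b < B" "b \<notin> Theta k B y ist"
          unfolding E3_def by blast
        have adv: "(ist, b) \<in> Xiadv k B p y" unfolding Xiadv_eq using b by simp
        have nxi: "(ist, b) \<notin> Xi k B p y" unfolding Xi_eq by simp
        have iS: "(ist, b) \<in> S" using adv SU by blast
        have "WFN k B p y ist b * Gfun k y lam a ist b \<in> D" unfolding D_def using iS by force
        thus ?thesis using WnXi[OF nxi] ee by auto
      qed
    qed
    have neD: "D \<noteq> {}" unfolding D_def using neS by simp
    have "Min (E1 \<union> E3) = Min D"
      using Min_eq_dom[OF _ DE neD dom] fE1 fE3 by simp
    thus ?thesis using o unfolding FF_def D_def by simp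
  qed
  have optA: "optimal k B (objACC k B p y lam) al \<longleftrightarrow> (\<forall>al'. feasible k B al' \<longrightarrow> FA al' \<le> FA al)"
    unfolding optimal_def using objA feas by auto
  have optF: "optimal k B (objFN k B p y lam) al \<longleftrightarrow> (\<forall>al'. feasible k B al' \<longrightarrow> FF al' \<le> FF al)"
    unfolding optimal_def using objF feas by auto
  show ?thesis unfolding SU optA optF A F by simp
qed

end
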